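(* Let $\mathbb{F}_q$ be a finite field, $S\subseteq\mathbb{F}_q\setminus\{0\}$ symmetric, $G=\Gamma(\mathbb{F}_q,S)$ and $\overline{G}$ its complement. Then $\overline{G}=\Gamma(\mathbb{F}_q,\overline{S})$ with $\overline{S}=(\mathbb{F}_q\setminus\{0\})\setminus S$, and \[\Theta_{\mathrm{lin}}(G)\cdot\Theta_{\mathrm{lin}}(\overline{G})\le q.\]
   Context: For a symmetric set $S\subseteq\mathbb{F}_q\setminus\{0\}$ ($S=-S$), the Cayley graph $\Gamma(\mathbb{F}_q,S)$ has vertex set $\mathbb{F}_q$, with $u\sim v$ iff $u-v\in S$. $G^k$ is the $k$-fold strong product (distinct vertices adjacent iff in each coordinate they are equal or adjacent). $\alpha_{\mathrm{lin}}(G^k)$ is the largest size of an independent set of $G^k$ that is a linear subspace of $\mathbb{F}_q^k$, and $\Theta_{\mathrm{lin}}(G)=\sup_k\alpha_{\mathrm{lin}}(G^k)^{1/k}$. *)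

theory Defs
  imports Complex_Main
begin

text \<open>Graphs on a vertex type are given by an adjacency relation.
  Vectors of \<open>F_q^k\<close> are functions \<open>nat \<Rightarrow> 'a\<close> vanishing at indices \<open>\<ge> k\<close>.\<close>

definition cayley_adj :: "'a::ab_group_add set \<Rightarrow> 'a \<Rightarrow> 'a \<Rightarrow> bool" where
  "cayley_adj S u v \<longleftrightarrow> u - v \<in> S"

definition graph_compl :: "('a \<Rightarrow> 'a \<Rightarrow> bool) \<Rightarrow> 'a \<Rightarrow> 'a \<Rightarrow> bool" where
  "graph_compl E u v \<longleftrightarrow> u \<noteq> v \<and> \<not> E u v"

definition vecs :: "nat \<Rightarrow> (nat \<Rightarrow> 'a::zero) set" where
  "vecs k = {x. \<forall>i\<ge>k. x i = 0}"

definition strong_adj :: "('a \<Rightarrow> 'a \<Rightarrow> bool) \<Rightarrow> nat \<Rightarrow> (nat \<Rightarrow> 'a) \<Rightarrow> (nat \<Rightarrow> 'a) \<Rightarrow> bool" where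
  "strong_adj E k x y \<longleftrightarrow> x \<noteq> y \<and> (\<forall>i<k. x i = y i \<or> E (x i) (y i))"

definition lin_subspace :: "nat \<Rightarrow> (nat \<Rightarrow> 'a::field) set \<Rightarrow> bool" where
  "lin_subspace k V \<longleftrightarrow> V \<subseteq> vecs k \<and> (\<lambda>i. 0) \<in> V
     \<and> (\<forall>x\<in>V. \<forall>y\<in>V. (\<lambda>i. x i + y i) \<in> V)
     \<and> (\<forall>c. \<forall>x\<in>V. (\<lambda>i. c * x i) \<in> V)"

definition indep_strong :: "('a \<Rightarrow> 'a \<Rightarrow> bool) \<Rightarrow> nat \<Rightarrow> (nat \<Rightarrow> 'a) set \<Rightarrow> bool" where
  "indep_strong E k I \<longleftrightarrow> (\<forall>x\<in>I. \<forall>y\<in>I. \<not> strong_adj E k x y)"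

definition alpha_lin :: "('a::field \<Rightarrow> 'a \<Rightarrow> bool) \<Rightarrow> nat \<Rightarrow> nat" where
  "alpha_lin E k = Max {card V | V. lin_subspace k V \<and> indep_strong E k V}"

definition theta_lin :: "('a::field \<Rightarrow> 'a \<Rightarrow> bool) \<Rightarrow> real" where
  "theta_lin E = (SUP k\<in>{1..}. real (alpha_lin E k) powr (1 / real k))"

end

theory Submission
  imports Defs "HOL-Computational_Algebra.Polynomial" "HOL-Library.FuncSet"
begin

lemma card_one_zero: "of_nat (card (UNIV::'a set)) = (0::'a::{field,finite})"
proof -
  have "(\<Sum>t\<in>(UNIV::'a set). t) = (\<Sum>t\<in>UNIV. t + 1)"
    by (rule sum.reindex_bij_witness[of _ "\<lambda>t. t + 1" "\<lambda>t. t - 1"]) auto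
  also have "\<dots> = (\<Sum>t\<in>UNIV. t) + of_nat (card (UNIV::'a set))" by (simp add: sum.distrib)
  finally show ?thesis by simp
qed

lemma roots_small: fixes j :: nat assumes "j \<ge> 1"
  shows "card {x::'a::{field,finite}. x ^ j = 1} \<le> j"
proof -
  let ?p = "monom (1::'a) j - 1"
  have d: "degree ?p \<le> j"
    by (metis degree_diff_le degree_monom_le degree_1 le0)
  have "coeff ?p j = 1" using assms by (simp only: coeff_diff coeff_monom coeff_1) simp
  hence "?p \<noteq> 0" by (metis coeff_0 zero_neq_one)
  hence "card {x. poly ?p x = 0} \<le> j" using card_poly_roots_bound d order_trans by blast
  moreover have "{x. poly ?p x = 0} = {x. x ^ j = 1}" by (auto simp: poly_monom)
  ultimately show ?thesis by simp
qed

lemma sum_pow_zero: assumes "j < card (UNIV::'a::{field,finite} set) - 1"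
  shows "(\<Sum>t\<in>(UNIV::'a set). t ^ j) = 0"
proof (cases "j = 0")
  case True thus ?thesis using card_one_zero[where 'a='a] by simp
next
  case False
  have "card {x::'a. x ^ j = 1} \<le> j" using False roots_small[of j] by auto
  also have "j < card (UNIV - {0::'a})" using assms by (simp add: card_Diff_singleton)
  finally have "\<not> (UNIV - {0::'a}) \<subseteq> {x. x ^ j = 1}"
    by (metis card_mono finite leD)
  then obtain g :: 'a where g: "g \<noteq> 0" "g ^ j \<noteq> 1" by auto
  have "(\<Sum>t\<in>(UNIV::'a set). t ^ j) = (\<Sum>t\<in>UNIV. (g * t) ^ j)"
    by (rule sum.reindex_bij_witness[of _ "\<lambda>t. g * t" "\<lambda>t. t / g"]) (use g in auto)
  also have "\<dots> = g ^ j * (\<Sum>t\<in>UNIV. t ^ j)" by (simp add: power_mult_distrib sum_distrib_left)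
  finally have "(g ^ j - 1) * (\<Sum>t\<in>(UNIV::'a set). t ^ j) = 0" by (simp add: algebra_simps)
  thus ?thesis using g by simp
qed

definition subsp :: "(nat \<Rightarrow> 'a::field) set \<Rightarrow> bool" where
  "subsp V \<longleftrightarrow> (\<lambda>i. 0) \<in> V \<and> (\<forall>x\<in>V. \<forall>y\<in>V. \<forall>c. (\<lambda>i. x i + c * y i) \<in> V)"

definition aff :: "(nat \<Rightarrow> 'a::field) set \<Rightarrow> ((nat \<Rightarrow> 'a) \<Rightarrow> 'a) \<Rightarrow> bool" where
  "aff V f \<longleftrightarrow> (\<forall>x\<in>V. \<forall>y\<in>V. \<forall>c. f (\<lambda>i. x i + c * y i) = f x + c * (f y - f (\<lambda>i. 0)))"

lemma card_field_ge2: "card (UNIV::'a::{field,finite} set) \<ge> 2"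
proof -
  have "card {0::'a, 1} \<le> card (UNIV::'a set)" by (rule card_mono) auto
  thus ?thesis by simp
qed

lemma sumA:
  fixes V :: "(nat \<Rightarrow> 'a::{field,finite}) set" and f :: "'b \<Rightarrow> (nat \<Rightarrow> 'a) \<Rightarrow> 'a"
  assumes "finite V" "subsp V" "finite I" "\<forall>m\<in>I. aff V (f m)"
    "(\<Sum>x\<in>V. \<Prod>m\<in>I. f m x) \<noteq> 0"
  shows "card V ^ (card (UNIV::'a set) - 1) \<le> card (UNIV::'a set) ^ card I"
  using assms
proof (induction "card V" arbitrary: V I rule: less_induct)
  case less
  let ?q = "card (UNIV::'a set)"
  have q2: "?q \<ge> 2" by (rule card_field_ge2)
  have z: "(\<lambda>i. 0) \<in> V" using less.prems(2) unfolding subsp_def by auto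
  show ?case
  proof (cases "V \<subseteq> {\<lambda>i. 0}")
    case True
    hence "V = {\<lambda>i. 0}" using z by auto
    moreover have "1 \<le> ?q ^ card I" using q2 by simp
    ultimately show ?thesis by simp
  next
    case False
    then obtain u where u: "u \<in> V" "u \<noteq> (\<lambda>i. 0)" by auto
    then obtain i where ui: "u i \<noteq> 0" by auto
    have cl: "\<And>x y c. x \<in> V \<Longrightarrow> y \<in> V \<Longrightarrow> (\<lambda>j. x j + c * y j) \<in> V"
      using less.prems(2) unfolding subsp_def by blast
    define w where "w = (\<lambda>j. (1 / u i) * u j)"
    have w: "w \<in> V" using cl[OF z u(1), of "1 / u i"] by (simp add: w_def)
    have wi: "w i = 1" using ui by (simp add: w_def)
    define V' where "V' = {x\<in>V. x i = 0}"
    have bij: "bij_betw (\<lambda>(x,t). (\<lambda>j. x j + t * w j)) (V' \<times> UNIV) V"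
    proof (rule bij_betw_byWitness[where f'="\<lambda>x. ((\<lambda>j. x j + (- x i) * w j), x i)"])
      show "\<forall>a\<in>V' \<times> UNIV. (\<lambda>x. ((\<lambda>j. x j + (- x i) * w j), x i)) ((\<lambda>(x,t). (\<lambda>j. x j + t * w j)) a) = a"
        using wi by (auto simp: V'_def algebra_simps)
      show "\<forall>a'\<in>V. (\<lambda>(x,t). (\<lambda>j. x j + t * w j)) ((\<lambda>x. ((\<lambda>j. x j + (- x i) * w j), x i)) a') = a'"
        by auto
      show "(\<lambda>(x,t). (\<lambda>j. x j + t * w j)) ` (V' \<times> UNIV) \<subseteq> V"
        using cl w by (auto simp: V'_def)
      show "(\<lambda>x. ((\<lambda>j. x j + (- x i) * w j), x i)) ` V \<subseteq> V' \<times> UNIV"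
      proof (rule image_subsetI)
        fix x assume x: "x \<in> V"
        have "(\<lambda>j. x j + (- x i) * w j) \<in> V" using cl[OF x w] .
        thus "(\<lambda>x. ((\<lambda>j. x j + (- x i) * w j), x i)) x \<in> V' \<times> UNIV"
          using wi by (simp add: V'_def)
      qed
    qed
    have finV': "finite V'" using less.prems(1) by (simp add: V'_def)
    have cardV: "card V = card V' * ?q"
      using bij_betw_same_card[OF bij] by (simp add: card_cartesian_product)
    have z': "(\<lambda>i. 0) \<in> V'" using z by (simp add: V'_def)
    have "card V' \<ge> 1" using finV' z' by (metis One_nat_def Suc_leI card_gt_0_iff empty_iff)
    hence lt: "card V' < card V" using cardV q2 by simp
    have subV': "subsp V'" using less.prems(2) z' unfolding subsp_def V'_def by auto
    have affV': "\<forall>m\<in>I. aff V' (f m)" using less.prems(4) unfolding aff_def V'_def by auto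
    define d where "d m = f m w - f m (\<lambda>i. 0)" for m
    define Q where "Q T x = (\<Prod>m\<in>I-T. f m x)" for T x
    have expand: "(\<Prod>m\<in>I. f m (\<lambda>j. x j + t * w j)) = (\<Sum>T\<in>Pow I. t ^ card T * ((\<Prod>m\<in>T. d m) * Q T x))"
      if x: "x \<in> V'" for x t
    proof -
      have "(\<Prod>m\<in>I. f m (\<lambda>j. x j + t * w j)) = (\<Prod>m\<in>I. t * d m + f m x)"
        using less.prems(4) x w unfolding aff_def d_def V'_def by (intro prod.cong) auto
      also have "\<dots> = (\<Sum>T\<in>Pow I. (\<Prod>m\<in>T. t * d m) * (\<Prod>m\<in>I-T. f m x))"
        by (rule prod_add) (rule less.prems(3))
      also have "\<dots> = (\<Sum>T\<in>Pow I. t ^ card T * ((\<Prod>m\<in>T. d m) * Q T x))"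
        by (intro sum.cong refl) (simp add: prod.distrib Q_def)
      finally show ?thesis .
    qed
    have "(\<Sum>x\<in>V. \<Prod>m\<in>I. f m x) = (\<Sum>(x,t)\<in>V' \<times> UNIV. \<Prod>m\<in>I. f m (\<lambda>j. x j + t * w j))"
      using sum.reindex_bij_betw[OF bij, of "\<lambda>x. \<Prod>m\<in>I. f m x"]
      by (simp add: case_prod_unfold)
    also have "\<dots> = (\<Sum>x\<in>V'. \<Sum>t\<in>UNIV. \<Prod>m\<in>I. f m (\<lambda>j. x j + t * w j))"
      by (rule sum.cartesian_product[symmetric])
    also have "\<dots> = (\<Sum>x\<in>V'. \<Sum>t\<in>UNIV. \<Sum>T\<in>Pow I. t ^ card T * ((\<Prod>m\<in>T. d m) * Q T x))"
      using expand by (intro sum.cong refl) auto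
    also have "\<dots> = (\<Sum>T\<in>Pow I. (\<Prod>m\<in>T. d m) * (\<Sum>t\<in>(UNIV::'a set). t ^ card T) * (\<Sum>x\<in>V'. Q T x))"
    proof -
      have "(\<Sum>x\<in>V'. \<Sum>t\<in>UNIV. \<Sum>T\<in>Pow I. t ^ card T * ((\<Prod>m\<in>T. d m) * Q T x))
          = (\<Sum>x\<in>V'. \<Sum>T\<in>Pow I. \<Sum>t\<in>UNIV. t ^ card T * ((\<Prod>m\<in>T. d m) * Q T x))"
        by (intro sum.cong refl sum.swap)
      also have "\<dots> = (\<Sum>T\<in>Pow I. \<Sum>x\<in>V'. \<Sum>t\<in>UNIV. t ^ card T * ((\<Prod>m\<in>T. d m) * Q T x))"
        by (rule sum.swap)
      also have "\<dots> = (\<Sum>T\<in>Pow I. (\<Prod>m\<in>T. d m) * (\<Sum>t\<in>(UNIV::'a set). t ^ card T) * (\<Sum>x\<in>V'. Q T x))"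
        by (intro sum.cong refl) (simp add: sum_distrib_left sum_distrib_right algebra_simps sum.swap[of _ V'])
      finally show ?thesis .
    qed
    finally have "(\<Sum>T\<in>Pow I. (\<Prod>m\<in>T. d m) * (\<Sum>t\<in>(UNIV::'a set). t ^ card T) * (\<Sum>x\<in>V'. Q T x)) \<noteq> 0"
      using less.prems(5) by simp
    then obtain T where T: "T \<in> Pow I"
      and ne: "(\<Prod>m\<in>T. d m) * (\<Sum>t\<in>(UNIV::'a set). t ^ card T) * (\<Sum>x\<in>V'. Q T x) \<noteq> 0"
      by (meson sum.not_neutral_contains_not_neutral)
    have "(\<Sum>t\<in>(UNIV::'a set). t ^ card T) \<noteq> 0" using ne by auto
    hence cT: "card T \<ge> ?q - 1" using sum_pow_zero[where 'a='a, of "card T"] by (cases "card T < ?q - 1") auto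
    have "(\<Sum>x\<in>V'. \<Prod>m\<in>I-T. f m x) \<noteq> 0" using ne by (auto simp: Q_def)
    hence IH: "card V' ^ (?q - 1) \<le> ?q ^ card (I - T)"
      using less.hyps[OF lt finV' subV' _ _] less.prems(3) affV' by auto
    have TI: "T \<subseteq> I" using T by auto
    have cTI: "card T \<le> card I" using TI less.prems(3) by (rule card_mono[rotated])
    have cD: "card (I - T) = card I - card T"
      using TI less.prems(3) by (meson card_Diff_subset finite_subset)
    have "card V ^ (?q - 1) = card V' ^ (?q - 1) * ?q ^ (?q - 1)"
      using cardV by (simp add: power_mult_distrib)
    also have "\<dots> \<le> ?q ^ (card I - card T) * ?q ^ (?q - 1)"
      using IH cD by simp
    also have "\<dots> = ?q ^ (card I - card T + (?q - 1))" by (simp add: power_add)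
    also have "\<dots> \<le> ?q ^ card I"
      using cT cTI q2 by (intro power_increasing) auto
    finally show ?thesis .
  qed
qed

lemma finite_vecs: "finite (vecs k :: (nat \<Rightarrow> 'a::{zero,finite}) set)"
proof -
  have "vecs k \<subseteq> (\<lambda>g j. if j < k then g j else 0) ` PiE {..<k} (\<lambda>_. (UNIV::'a set))"
  proof
    fix x :: "nat \<Rightarrow> 'a" assume x: "x \<in> vecs k"
    have "x = (\<lambda>j. if j < k then restrict x {..<k} j else 0)"
      using x unfolding vecs_def by (auto intro!: ext simp: not_less)
    moreover have "restrict x {..<k} \<in> PiE {..<k} (\<lambda>_. UNIV)" by auto
    ultimately show "x \<in> (\<lambda>g j. if j < k then g j else 0) ` PiE {..<k} (\<lambda>_. (UNIV::'a set))"
      by blast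
  qed
  thus ?thesis by (rule finite_subset) (auto intro!: finite_imageI finite_PiE)
qed

lemma lemB:
  fixes V :: "(nat \<Rightarrow> 'a::{field,finite}) set" and T :: "'a set"
  assumes lin: "lin_subspace k V" and T0: "0 \<notin> T"
    and nz: "\<And>x. x \<in> V \<Longrightarrow> x \<noteq> (\<lambda>i. 0) \<Longrightarrow> \<exists>i<k. x i \<in> T"
  shows "card V ^ (card (UNIV::'a set) - 1) \<le> card (UNIV::'a set) ^ (k * card T)"
proof -
  have fin: "finite V" using lin finite_vecs unfolding lin_subspace_def by (metis finite_subset)
  have sub: "subsp V"
    unfolding subsp_def
  proof (intro conjI ballI allI)
    show "(\<lambda>i. 0) \<in> V" using lin unfolding lin_subspace_def by auto
    fix x y c assume "x \<in> V" "y \<in> V"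
    hence "(\<lambda>i. c * y i) \<in> V" using lin unfolding lin_subspace_def by auto
    thus "(\<lambda>i. x i + c * y i) \<in> V" using \<open>x \<in> V\<close> lin unfolding lin_subspace_def by auto
  qed
  define I where "I = {..<k} \<times> T"
  define f where "f p x = 1 - x (fst p) / snd p" for p :: "nat \<times> 'a" and x :: "nat \<Rightarrow> 'a"
  have finI: "finite I" by (simp add: I_def)
  have aff: "\<forall>m\<in>I. aff V (f m)"
    unfolding aff_def f_def by (auto simp: add_divide_distrib algebra_simps)
  have val: "(\<Prod>m\<in>I. f m x) = (if x = (\<lambda>i. 0) then 1 else 0)" if x: "x \<in> V" for x
  proof (cases "x = (\<lambda>i. 0)")
    case True thus ?thesis by (simp add: f_def)
  next
    case False
    then obtain i where i: "i < k" "x i \<in> T" using nz x by blast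
    hence "(i, x i) \<in> I" "f (i, x i) x = 0" using T0 by (auto simp: I_def f_def)
    thus ?thesis using False finI by (metis prod_zero_iff)
  qed
  have "(\<Sum>x\<in>V. \<Prod>m\<in>I. f m x) = (\<Sum>x\<in>V. if x = (\<lambda>i. 0) then 1 else 0)"
    using val by (rule sum.cong[OF refl])
  also have "\<dots> = 1" using fin sub unfolding subsp_def by (simp add: sum.delta')
  finally have "(\<Sum>x\<in>V. \<Prod>m\<in>I. f m x) \<noteq> 0" by simp
  from sumA[OF fin sub finI aff this] show ?thesis
    by (simp add: I_def card_cartesian_product)
qed

lemma alpha_bound:
  fixes E :: "'a::{field,finite} \<Rightarrow> 'a \<Rightarrow> bool"
  assumes "\<And>V. lin_subspace k V \<Longrightarrow> indep_strong E k V \<Longrightarrow> card V ^ m \<le> B"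
    and m: "m \<ge> 1"
  shows "alpha_lin E k ^ m \<le> B" "alpha_lin E k \<ge> 1"
proof -
  let ?M = "{card V | V. lin_subspace k V \<and> indep_strong E k V}"
  have z: "lin_subspace k {\<lambda>i::nat. 0::'a}"
    by (auto simp: lin_subspace_def vecs_def)
  have zi: "indep_strong E k {\<lambda>i::nat. 0::'a}"
    by (auto simp: indep_strong_def strong_adj_def)
  have ne: "1 \<in> ?M" using z zi by force
  have "?M \<subseteq> {..B}"
  proof
    fix n assume "n \<in> ?M"
    then obtain V where "n = card V" "lin_subspace k V" "indep_strong E k V" by auto
    hence "n ^ m \<le> B" using assms(1) by auto
    moreover have "n \<le> n ^ m" using m by (cases n) (auto intro: self_le_power)
    ultimately show "n \<in> {..B}" by simp
  qed
  hence fin: "finite ?M" by (rule finite_subset) simp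
  have "Max ?M \<in> ?M" using fin ne by (intro Max_in) auto
  then obtain V where "Max ?M = card V" "lin_subspace k V" "indep_strong E k V" by auto
  thus "alpha_lin E k ^ m \<le> B" using assms(1) unfolding alpha_lin_def by simp
  show "alpha_lin E k \<ge> 1" unfolding alpha_lin_def using fin ne by (simp add: Max_ge_iff)
qed

lemma theta_bound:
  fixes E :: "'a::{field,finite} \<Rightarrow> 'a \<Rightarrow> bool"
  assumes "\<And>k V. lin_subspace k V \<Longrightarrow> indep_strong E k V \<Longrightarrow>
      card V ^ (card (UNIV::'a set) - 1) \<le> card (UNIV::'a set) ^ (k * t)"
  shows "theta_lin E \<le> real (card (UNIV::'a set)) powr (real t / real (card (UNIV::'a set) - 1))"
    "theta_lin E \<ge> 0"
proof -
  let ?q = "card (UNIV::'a set)"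
  define m where "m = ?q - 1"
  have m1: "m \<ge> 1" using card_field_ge2[where 'a='a] by (simp add: m_def)
  have q0: "real ?q > 0" using card_field_ge2[where 'a='a] by simp
  have each: "real (alpha_lin E k) powr (1 / real k) \<le> real ?q powr (real t / real m)"
    if k: "k \<ge> 1" for k
  proof -
    have a: "alpha_lin E k ^ m \<le> ?q ^ (k * t)" "alpha_lin E k \<ge> 1"
      using alpha_bound[of k E m "?q ^ (k * t)"] assms m1 by (auto simp: m_def)
    let ?a = "real (alpha_lin E k)"
    have a0: "?a > 0" using a(2) by simp
    have "?a ^ m \<le> real ?q ^ (k * t)" using a(1) by (metis of_nat_le_iff of_nat_power)
    moreover have e1: "?a powr (real m) = ?a ^ m" using a0 by (rule powr_realpow)
    moreover have e2: "real ?q powr real (k * t) = real ?q ^ (k * t)" using q0 by (rule powr_realpow)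
    ultimately have "?a powr (real m) \<le> real ?q powr (real (k * t))" by simp
    hence "(?a powr (real m)) powr (1 / (real k * real m)) \<le> (real ?q powr (real (k * t))) powr (1 / (real k * real m))"
      by (intro powr_mono2) auto
    moreover have "(?a powr (real m)) powr (1 / (real k * real m)) = ?a powr (1 / real k)"
      using k m1 by (simp add: powr_powr)
    moreover have "(real ?q powr (real (k * t))) powr (1 / (real k * real m)) = real ?q powr (real t / real m)"
      using k m1 by (simp add: powr_powr)
    ultimately show ?thesis by simp
  qed
  show "theta_lin E \<le> real ?q powr (real t / real (?q - 1))"
    unfolding theta_lin_def m_def[symmetric]
    by (rule cSUP_least) (use each in auto)
  have bdd: "bdd_above ((\<lambda>k. real (alpha_lin E k) powr (1 / real k)) ` {1..})"
    using each by (intro bdd_aboveI2[where M="real ?q powr (real t / real m)"]) auto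
  have "0 \<le> real (alpha_lin E 1) powr (1 / real 1)" by simp
  also have "\<dots> \<le> theta_lin E" unfolding theta_lin_def
    by (rule cSUP_upper[OF _ bdd]) auto
  finally show "theta_lin E \<ge> 0" .
qed

theorem mainTheorem3:
  fixes S :: "'a::{field,finite} set"
  assumes "0 \<notin> S" and "uminus ` S = S"
  shows "(\<forall>u v. graph_compl (cayley_adj S) u v \<longleftrightarrow> cayley_adj ((UNIV - {0}) - S) u v)
    \<and> theta_lin (cayley_adj S) * theta_lin (graph_compl (cayley_adj S)) \<le> real (card (UNIV :: 'a set))"
proof (intro conjI allI)
  fix u v :: 'a
  show "graph_compl (cayley_adj S) u v \<longleftrightarrow> cayley_adj ((UNIV - {0}) - S) u v"
    by (auto simp: graph_compl_def cayley_adj_def)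
next
  let ?q = "card (UNIV::'a set)"
  let ?Sc = "(UNIV - {0}) - S"
  have zero: "(\<lambda>i. 0) \<in> V" if "lin_subspace k V" for k and V :: "(nat \<Rightarrow> 'a) set"
    using that by (simp add: lin_subspace_def)
  have G: "card V ^ (?q - 1) \<le> ?q ^ (k * card ?Sc)"
    if "lin_subspace k V" "indep_strong (cayley_adj S) k V" for k V
  proof (rule lemB[OF that(1)])
    show "0 \<notin> ?Sc" by simp
    fix x assume x: "x \<in> V" "x \<noteq> (\<lambda>i. 0)"
    have "\<not> strong_adj (cayley_adj S) k x (\<lambda>i. 0)"
      using that(2) x(1) zero[OF that(1)] unfolding indep_strong_def by blast
    thus "\<exists>i<k. x i \<in> ?Sc" using x(2) by (auto simp: strong_adj_def cayley_adj_def)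
  qed
  have H: "card V ^ (?q - 1) \<le> ?q ^ (k * card S)"
    if "lin_subspace k V" "indep_strong (graph_compl (cayley_adj S)) k V" for k V
  proof (rule lemB[OF that(1)])
    show "0 \<notin> S" by fact
    fix x assume x: "x \<in> V" "x \<noteq> (\<lambda>i. 0)"
    have "\<not> strong_adj (graph_compl (cayley_adj S)) k x (\<lambda>i. 0)"
      using that(2) x(1) zero[OF that(1)] unfolding indep_strong_def by blast
    thus "\<exists>i<k. x i \<in> S" using x(2) by (auto simp: strong_adj_def cayley_adj_def graph_compl_def)
  qed
  note tG = theta_bound[of "cayley_adj S" "card ?Sc", OF G]
  note tH = theta_bound[of "graph_compl (cayley_adj S)" "card S", OF H]
  have q2: "?q \<ge> 2" by (rule card_field_ge2)
  have cS: "card ?Sc + card S = ?q - 1"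
  proof -
    have "S \<subseteq> UNIV - {0}" using assms(1) by auto
    hence "card ?Sc = card (UNIV - {0::'a}) - card S" by (simp add: card_Diff_subset)
    moreover have "card S \<le> card (UNIV - {0::'a})" using \<open>S \<subseteq> _\<close> by (intro card_mono) auto
    moreover have "card (UNIV - {0::'a}) = ?q - 1" by (simp add: card_Diff_singleton)
    ultimately show ?thesis by simp
  qed
  have "theta_lin (cayley_adj S) * theta_lin (graph_compl (cayley_adj S))
     \<le> real ?q powr (real (card ?Sc) / real (?q - 1)) * real ?q powr (real (card S) / real (?q - 1))"
    by (intro mult_mono tG tH) auto
  also have "\<dots> = real ?q powr ((real (card ?Sc) + real (card S)) / real (?q - 1))"
    by (simp add: powr_add add_divide_distrib)
  also have "(real (card ?Sc) + real (card S)) / real (?q - 1) = 1"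
    using cS q2 by (metis of_nat_add divide_self_if of_nat_0_eq_iff Suc_1 diff_is_0_eq not_less_eq_eq)
  also have "real ?q powr 1 = real ?q" by simp
  finally show "theta_lin (cayley_adj S) * theta_lin (graph_compl (cayley_adj S)) \<le> real ?q" .
qed
end
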